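(* Let $C'$, $S$, $\widehat C$ be as in the context, and let $C'T'$ be a filling (with positive integer entries) of a Young diagram whose first column is $C'$. Let $\widehat C C'T'$ be the filling obtained by adjoining $\widehat C$ as a new first column on the left. If $(\widehat C,C')$ satisfies the Non-overlapping Condition, then \[ \mathrm{inv}(\widehat C C'T')=\mathrm{inv}(C'T')+\hat N . \]
   Context: A column is a finite sequence of entries listed top to bottom. $C'=(C'(1),\ldots,C'(c'))$ is a sequence of distinct positive integers and $S$ is a set of $c$ positive integers, $c\in\{c',c'+1\}$, such that with $s_1<\cdots<s_c$ the elements of $S$ and $t_1<\cdots<t_{c'}$ the entries of $C'$ sorted, $s_r\le t_r$ for $r\le c'$. The column $\widehat C$ of length $c$ is built as follows: every $x\in S\cap C'$ is placed in the row where $x$ occurs in $C'$; if $c=c'+1$, the largest element of $S\setminus C'$ is placed in row $c$; the remaining elements of $S\setminus C'$, in decreasing order, are placed in the rows occupied in $C'$ by the elements of $C'\setminus S$, in decreasing order (the $k$-th largest next to the $k$-th largest). (Since $c\ge c'$, $\widehat CC'T'$ is a filling of a Young diagram.) Pivots: row $r$ is a pivot row if either $r\le c'$ and $\widehat C(r)<C'(r)$, or $r=c'+1\le c$. With pivot rows $q_1,\ldots,q_p$, put $b_j=\widehat C(q_j)$, $d_j=C'(q_j)$ if $q_j\le c'$ and $d_j=\infty$ otherwise. Non-overlapping Condition: $p\le1$, or the intervals $[b_j,d_j]$ ($[b_j,\infty)$ if $d_j=\infty$) are pairwise disjoint. Define $\hat N=\sum_{j=1}^p\#\{r<q_j:\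 C'(r)\in S,\ b_j<C'(r)<d_j\}$. Inversion statistic of a filling $\sigma$ of a Young diagram (cells $(i,j)$, row $i$, column $j$, English convention): $\mathrm{inv}(\sigma)$ is the number of pairs of cells $(u,v)$ with $u=(j,k)$, $v=(i,k+1)$, $i<j$, such that $\sigma(u)<\sigma(v)<\sigma(w)$ where $w=(j,k+1)$ if this cell exists, and such that $\sigma(u)<\sigma(v)$ otherwise. *)

theory Defs
  imports Main
begin

text \<open>A column is a list of entries, listed top to bottom.
  A filling of a Young diagram is a list of columns (left to right);
  the entry in row r, column k (both 0-indexed) is F ! k ! r.
  (Rows/columns of the paper are 1-indexed; we shift by one.)\<close>

definition young_filling :: "nat list list \<Rightarrow> bool" where
  "young_filling F \<longleftrightarrow>
     (\<forall>col\<in>set F. col \<noteq> [] \<and> (\<forall>x\<in>set col. 0 < x)) \<and>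
     (\<forall>k. Suc k < length F \<longrightarrow> length (F ! Suc k) \<le> length (F ! k))"

text \<open>Inversion statistic: pairs u = (j,k), v = (i,k+1), i < j,
  with sigma(u) < sigma(v) < sigma(w) where w = (j,k+1) if this cell exists,
  and sigma(u) < sigma(v) otherwise.  Triples (j,i,k) below.\<close>

definition inv_fill :: "nat list list \<Rightarrow> nat" where
  "inv_fill F = card {(j, i, k). Suc k < length F \<and> i < j \<and>
       j < length (F ! k) \<and> i < length (F ! Suc k) \<and>
       (if j < length (F ! Suc k)
        then F ! k ! j < F ! Suc k ! i \<and> F ! Suc k ! i < F ! Suc k ! j
        else F ! k ! j < F ! Suc k ! i)}"

definition admissible :: "nat list \<Rightarrow> nat set \<Rightarrow> bool" where
  "admissible C' S \<longleftrightarrow>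
     distinct C' \<and> (\<forall>x\<in>set C'. 0 < x) \<and>
     finite S \<and> (\<forall>x\<in>S. 0 < x) \<and>
     (card S = length C' \<or> card S = Suc (length C')) \<and>
     (\<forall>r < length C'. sorted_list_of_set S ! r \<le> sort C' ! r)"

text \<open>For a row r with C'(r) not in S,
  the k-th largest element of C' \<setminus> S (k counted from 0, i.e. the number of
  elements of C' \<setminus> S larger than C'(r)) receives the k-th largest among the
  remaining elements of S \<setminus> C'.\<close>

definition hatC :: "nat list \<Rightarrow> nat set \<Rightarrow> nat list" where
  "hatC C' S =
     (let new = S - set C';
          extra = (card S = Suc (length C'));
          rest = (if extra then new - {Max new} else new);
          Es = rev (sorted_list_of_set rest)
      in map (\<lambda>r. if r < length C' then
                     (if C' ! r \<in> S then C' ! r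
                      else Es ! card {y \<in> set C' - S. C' ! r < y})
                   else Max new)
             [0..<card S])"

definition pivot :: "nat list \<Rightarrow> nat set \<Rightarrow> nat \<Rightarrow> bool" where
  "pivot C' S r \<longleftrightarrow>
     (r < length C' \<and> hatC C' S ! r < C' ! r) \<or>
     (r = length C' \<and> length C' < card S)"

definition pivot_interval :: "nat list \<Rightarrow> nat set \<Rightarrow> nat \<Rightarrow> nat set" where
  "pivot_interval C' S q =
     (if q < length C' then {hatC C' S ! q .. C' ! q} else {hatC C' S ! q ..})"

definition non_overlapping :: "nat list \<Rightarrow> nat set \<Rightarrow> bool" where
  "non_overlapping C' S \<longleftrightarrow>
     card {q. pivot C' S q} \<le> 1 \<or>
     (\<forall>q1 q2. pivot C' S q1 \<and> pivot C' S q2 \<and> q1 \<noteq> q2 \<longrightarrow>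
        pivot_interval C' S q1 \<inter> pivot_interval C' S q2 = {})"

definition Nhat :: "nat list \<Rightarrow> nat set \<Rightarrow> nat" where
  "Nhat C' S = (\<Sum>q \<in> {q. pivot C' S q}.
     card {r. r < q \<and> C' ! r \<in> S \<and> hatC C' S ! q < C' ! r \<and>
              (q < length C' \<longrightarrow> C' ! r < C' ! q)})"

end

theory Submission
  imports Defs
begin

definition restS :: "nat list \<Rightarrow> nat set \<Rightarrow> nat set" where
  "restS C' S = (if card S = Suc (length C') then (S - set C') - {Max (S - set C')} else S - set C')"

definition EsS :: "nat list \<Rightarrow> nat set \<Rightarrow> nat list" where
  "EsS C' S = rev (sorted_list_of_set (restS C' S))"

definition kk :: "nat list \<Rightarrow> nat set \<Rightarrow> nat \<Rightarrow> nat" where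
  "kk C' S r = card {y \<in> set C' - S. C' ! r < y}"

lemma hat_len: "length (hatC C' S) = card S"
  by (simp add: hatC_def Let_def)

lemma hat_nth: "r < card S \<Longrightarrow> hatC C' S ! r =
  (if r < length C' then (if C' ! r \<in> S then C' ! r else EsS C' S ! kk C' S r) else Max (S - set C'))"
  unfolding hatC_def Let_def restS_def[symmetric] EsS_def[symmetric] kk_def[symmetric]
  by (simp only: nth_map length_upt nth_upt add_0 diff_zero)

lemma card_rest:
  assumes "admissible C' S"
  shows "card (restS C' S) = card (set C' - S)"
proof -
  have d: "distinct C'" and f: "finite S" and c: "card S = length C' \<or> card S = Suc (length C')"
    using assms by (auto simp: admissible_def)
  have cC: "card (set C') = length C'" using d by (simp add: distinct_card)
  have "card (set C' - S) = card (set C' - (set C' \<inter> S))" by (rule arg_cong[where f=card]) blast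
  also have "\<dots> = card (set C') - card (set C' \<inter> S)" by (rule card_Diff_subset) auto
  finally have e1: "card (set C' - S) = length C' - card (S \<inter> set C')" using cC by (simp add: Int_commute)
  have "card (S - set C') = card (S - (S \<inter> set C'))" by (rule arg_cong[where f=card]) blast
  also have "\<dots> = card S - card (S \<inter> set C')" using f by (intro card_Diff_subset) auto
  finally have e2: "card (S - set C') = card S - card (S \<inter> set C')" .
  have "card (S \<inter> set C') \<le> card (set C')" by (intro card_mono) auto
  then have le: "card (S \<inter> set C') \<le> length C'" using cC by simp
  show ?thesis
  proof (cases "card S = Suc (length C')")
    case True
    have ne: "S - set C' \<noteq> {}"
    proof
      assume "S - set C' = {}"
      then have "card (S - set C') = 0" by (simp only: card.empty)
      then show False using True le e2 by simp
    qed
    have fn: "finite (S - set C')" using f by simp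
    have "card (restS C' S) = card (S - set C') - 1"
      using True unfolding restS_def using card_Diff_singleton[OF Max_in[OF fn ne]] by simp
    then show ?thesis using True e1 e2 le by simp
  next
    case False
    then show ?thesis using c e1 e2 by (simp add: restS_def)
  qed
qed

lemma fin_rest: "admissible C' S \<Longrightarrow> finite (restS C' S)"
  by (simp add: admissible_def restS_def)

lemma len_Es: "admissible C' S \<Longrightarrow> length (EsS C' S) = card (set C' - S)"
  by (simp add: EsS_def card_rest)

lemma set_Es: "admissible C' S \<Longrightarrow> set (EsS C' S) = restS C' S"
  by (simp add: EsS_def fin_rest)

lemma kk_lt:
  assumes "r < length C'" "C' ! r \<notin> S"
  shows "kk C' S r < card (set C' - S)"
proof -
  have m: "C' ! r \<in> set C' - S" using assms by simp
  have sub: "{y \<in> set C' - S. C' ! r < y} \<subseteq> set C' - S" by blast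
  have nm: "C' ! r \<notin> {y \<in> set C' - S. C' ! r < y}" by simp
  have "{y \<in> set C' - S. C' ! r < y} \<noteq> set C' - S" using m nm by blast
  then have "{y \<in> set C' - S. C' ! r < y} \<subset> set C' - S" using sub by blast
  then show ?thesis unfolding kk_def by (rule psubset_card_mono[rotated]) simp
qed

lemma Es_dec:
  assumes "a < b" "b < length (EsS C' S)"
  shows "EsS C' S ! b < EsS C' S ! a"
proof -
  let ?L = "sorted_list_of_set (restS C' S)"
  have s: "sorted_wrt (<) ?L" by simp
  have "?L ! (length ?L - Suc b) < ?L ! (length ?L - Suc a)"
    using assms by (intro sorted_wrt_nth_less[OF s]) (auto simp: EsS_def)
  then show ?thesis using assms by (simp add: EsS_def rev_nth)
qed

lemma piv_fin: "finite {q. pivot C' S q}"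
proof (rule finite_subset)
  show "{q. pivot C' S q} \<subseteq> {..length C'}" by (auto simp: pivot_def)
qed simp

lemma two_piv:
  assumes "non_overlapping C' S" "pivot C' S a" "pivot C' S b" "a \<noteq> b"
    "x \<in> pivot_interval C' S a" "x \<in> pivot_interval C' S b"
  shows False
proof -
  have "{a, b} \<subseteq> {q. pivot C' S q}" using assms by auto
  then have "card {a, b} \<le> card {q. pivot C' S q}" by (intro card_mono piv_fin)
  then have "\<not> card {q. pivot C' S q} \<le> 1" using assms(4) by simp
  then have "pivot_interval C' S a \<inter> pivot_interval C' S b = {}"
    using assms(1-4) unfolding non_overlapping_def by blast
  then show False using assms(5,6) by blast
qed

lemma adm_len: "admissible C' S \<Longrightarrow> length C' \<le> card S"
  by (auto simp: admissible_def)

lemma H_notin: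
  assumes "admissible C' S" "r < length C'" "C' ! r \<notin> S"
  shows "hatC C' S ! r = EsS C' S ! kk C' S r" "hatC C' S ! r \<in> restS C' S"
proof -
  have "r < card S" using assms adm_len[OF assms(1)] by simp
  then show e: "hatC C' S ! r = EsS C' S ! kk C' S r" using assms by (simp add: hat_nth)
  have "kk C' S r < length (EsS C' S)" using kk_lt[OF assms(2,3)] len_Es[OF assms(1)] by simp
  then have "EsS C' S ! kk C' S r \<in> set (EsS C' S)" by (rule nth_mem)
  then show "hatC C' S ! r \<in> restS C' S" using e set_Es[OF assms(1)] by simp
qed

lemma H_in:
  assumes "admissible C' S" "r < length C'" "C' ! r \<in> S"
  shows "hatC C' S ! r = C' ! r"
proof -
  have "r < card S" using assms adm_len[OF assms(1)] by simp
  then show ?thesis using assms by (simp add: hat_nth)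
qed

lemma key1:
  assumes adm: "admissible C' S" and no: "non_overlapping C' S"
    and ij: "i < j" "j < length C'"
    and h1: "hatC C' S ! j < C' ! i" and h2: "C' ! i < C' ! j"
  shows "C' ! i \<in> S"
proof (rule ccontr)
  assume ni: "C' ! i \<notin> S"
  have i: "i < length C'" using ij by simp
  have nj: "C' ! j \<notin> S"
  proof
    assume "C' ! j \<in> S"
    then have "hatC C' S ! j = C' ! j" using H_in[OF adm ij(2)] by simp
    then show False using h1 h2 by simp
  qed
  have fin: "finite (set C' - S)" by simp
  have sub: "{y \<in> set C' - S. C' ! j < y} \<subseteq> {y \<in> set C' - S. C' ! i < y}" using h2 by auto
  have mem: "C' ! j \<in> {y \<in> set C' - S. C' ! i < y}" using h2 nj ij by simp
  have "C' ! j \<notin> {y \<in> set C' - S. C' ! j < y}" by simp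
  then have "{y \<in> set C' - S. C' ! j < y} \<subset> {y \<in> set C' - S. C' ! i < y}" using sub mem by blast
  then have "kk C' S j < kk C' S i" unfolding kk_def by (rule psubset_card_mono[rotated]) simp
  moreover have "kk C' S i < length (EsS C' S)" using kk_lt[OF i ni] len_Es[OF adm] by simp
  ultimately have "EsS C' S ! kk C' S i < EsS C' S ! kk C' S j" by (rule Es_dec)
  then have lt: "hatC C' S ! i < hatC C' S ! j" using H_notin(1)[OF adm i ni] H_notin(1)[OF adm ij(2) nj] by simp
  have pi: "pivot C' S i" using lt h1 i by (simp add: pivot_def)
  have pj: "pivot C' S j" using h1 h2 ij by (simp add: pivot_def)
  have "hatC C' S ! j \<in> pivot_interval C' S i" using lt h1 i by (simp add: pivot_interval_def)
  moreover have "hatC C' S ! j \<in> pivot_interval C' S j" using h1 h2 ij by (simp add: pivot_interval_def)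
  ultimately show False using two_piv[OF no pi pj] ij by simp
qed

lemma key2:
  assumes adm: "admissible C' S" and no: "non_overlapping C' S"
    and c: "card S = Suc (length C')" and i: "i < length C'"
    and h: "hatC C' S ! length C' < C' ! i"
  shows "C' ! i \<in> S"
proof (rule ccontr)
  assume ni: "C' ! i \<notin> S"
  have hc: "hatC C' S ! length C' = Max (S - set C')" using c by (simp add: hat_nth)
  have f: "finite (S - set C')" using adm by (simp add: admissible_def)
  have "hatC C' S ! i \<in> restS C' S" using H_notin(2)[OF adm i ni] .
  then have hi: "hatC C' S ! i \<in> S - set C'" "hatC C' S ! i \<noteq> Max (S - set C')"
    using c by (auto simp: restS_def)
  have "hatC C' S ! i \<le> Max (S - set C')" using Max_ge[OF f hi(1)] .
  then have lt: "hatC C' S ! i < Max (S - set C')" using hi(2) by simp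
  have pi: "pivot C' S i" using lt h hc i by (simp add: pivot_def)
  have pj: "pivot C' S (length C')" using c by (simp add: pivot_def)
  have "Max (S - set C') \<in> pivot_interval C' S i" using lt h hc i by (simp add: pivot_interval_def)
  moreover have "Max (S - set C') \<in> pivot_interval C' S (length C')" using hc by (simp add: pivot_interval_def)
  ultimately show False using two_piv[OF no pi pj] i by simp
qed

definition Pset :: "nat list \<Rightarrow> nat set \<Rightarrow> (nat \<times> nat) set" where
  "Pset C' S = {(j, i). i < j \<and> j < card S \<and> i < length C' \<and>
     (if j < length C' then hatC C' S ! j < C' ! i \<and> C' ! i < C' ! j
      else hatC C' S ! j < C' ! i)}"

definition Qfam :: "nat list \<Rightarrow> nat set \<Rightarrow> nat \<Rightarrow> nat set" where
  "Qfam C' S q = {r. r < q \<and> C' ! r \<in> S \<and> hatC C' S ! q < C' ! r \<and>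
              (q < length C' \<longrightarrow> C' ! r < C' ! q)}"

lemma P_eq_Q:
  assumes adm: "admissible C' S" and no: "non_overlapping C' S"
  shows "Pset C' S = Sigma {q. pivot C' S q} (Qfam C' S)"
proof (rule set_eqI)
  fix x :: "nat \<times> nat"
  obtain j i where x: "x = (j, i)" by (cases x)
  have c: "card S = length C' \<or> card S = Suc (length C')" using adm by (simp add: admissible_def)
  show "x \<in> Pset C' S \<longleftrightarrow> x \<in> Sigma {q. pivot C' S q} (Qfam C' S)"
  proof
    assume "x \<in> Pset C' S"
    then have m: "i < j" "j < card S" "i < length C'"
      "if j < length C' then hatC C' S ! j < C' ! i \<and> C' ! i < C' ! j else hatC C' S ! j < C' ! i"
      unfolding x Pset_def by auto
    show "x \<in> Sigma {q. pivot C' S q} (Qfam C' S)"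
    proof (cases "j < length C'")
      case True
      then have h: "hatC C' S ! j < C' ! i" "C' ! i < C' ! j" using m(4) by auto
      have "C' ! i \<in> S" using key1[OF adm no m(1) True h] .
      then show ?thesis using h True m unfolding x Qfam_def by (auto simp: pivot_def)
    next
      case False
      then have jc: "j = length C'" "card S = Suc (length C')" using m(2) c by auto
      have h: "hatC C' S ! j < C' ! i" using m(4) False by simp
      have "C' ! i \<in> S" using key2[OF adm no jc(2) m(3)] h jc(1) by simp
      then show ?thesis using h jc m unfolding x Qfam_def by (auto simp: pivot_def)
    qed
  next
    assume "x \<in> Sigma {q. pivot C' S q} (Qfam C' S)"
    then have p: "pivot C' S j" and q: "i < j" "C' ! i \<in> S" "hatC C' S ! j < C' ! i"
       "j < length C' \<longrightarrow> C' ! i < C' ! j"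
      unfolding x Qfam_def by auto
    have jl: "j \<le> length C'" "j < card S" using p adm_len[OF adm] by (auto simp: pivot_def)
    show "x \<in> Pset C' S" using q jl unfolding x Pset_def by auto
  qed
qed

lemma card_P:
  assumes adm: "admissible C' S" and no: "non_overlapping C' S"
  shows "card (Pset C' S) = Nhat C' S"
proof -
  have "card (Pset C' S) = (\<Sum>q\<in>{q. pivot C' S q}. card (Qfam C' S q))"
    unfolding P_eq_Q[OF adm no]
    by (rule card_SigmaI[OF piv_fin]) (auto simp: Qfam_def)
  then show ?thesis by (simp add: Nhat_def Qfam_def)
qed

definition invset :: "nat list list \<Rightarrow> (nat \<times> nat \<times> nat) set" where
  "invset F = {(j, i, k). Suc k < length F \<and> i < j \<and>
       j < length (F ! k) \<and> i < length (F ! Suc k) \<and>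
       (if j < length (F ! Suc k)
        then F ! k ! j < F ! Suc k ! i \<and> F ! Suc k ! i < F ! Suc k ! j
        else F ! k ! j < F ! Suc k ! i)}"

lemma inv_fill_invset: "inv_fill F = card (invset F)"
  by (simp add: inv_fill_def invset_def)

lemma fin_invset: "finite (invset F)"
proof (rule finite_subset)
  let ?M = "sum_list (map length F)"
  show "invset F \<subseteq> {..<?M} \<times> {..<?M} \<times> {..<length F}"
  proof
    fix x assume "x \<in> invset F"
    then obtain j i k where x: "x = (j, i, k)" and h: "Suc k < length F" "i < j" "j < length (F ! k)"
      unfolding invset_def by auto
    have "length (F ! k) \<in> set (map length F)" using h(1) by simp
    then have "length (F ! k) \<le> ?M" by (rule member_le_sum_list) simp
    then show "x \<in> {..<?M} \<times> {..<?M} \<times> {..<length F}" using h x by auto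
  qed
qed simp

lemma mem0: "(j, i, 0) \<in> invset (hatC C' S # C' # T') \<longleftrightarrow> (j, i) \<in> Pset C' S"
  unfolding invset_def Pset_def by (simp add: hat_len)

lemma memS: "(j, i, Suc k) \<in> invset (H # G) \<longleftrightarrow> (j, i, k) \<in> invset G"
  unfolding invset_def by simp

lemma split_inv:
  "invset (hatC C' S # C' # T') =
     (\<lambda>(j, i). (j, i, 0::nat)) ` Pset C' S \<union> (\<lambda>(j, i, k). (j, i, Suc k)) ` invset (C' # T')"
proof (rule set_eqI)
  fix x :: "nat \<times> nat \<times> nat"
  obtain j i k where x: "x = (j, i, k)" by (cases x) auto
  show "x \<in> invset (hatC C' S # C' # T') \<longleftrightarrow>
     x \<in> (\<lambda>(j, i). (j, i, 0::nat)) ` Pset C' S \<union> (\<lambda>(j, i, k). (j, i, Suc k)) ` invset (C' # T')"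
  proof (cases k)
    case 0
    have "x \<in> (\<lambda>(j, i). (j, i, 0::nat)) ` Pset C' S \<longleftrightarrow> (j, i) \<in> Pset C' S"
      unfolding x 0 by force
    moreover have "x \<notin> (\<lambda>(j, i, k). (j, i, Suc k)) ` invset (C' # T')" unfolding x 0 by auto
    ultimately show ?thesis using mem0 unfolding x 0 by blast
  next
    case (Suc m)
    have "x \<in> (\<lambda>(j, i, k). (j, i, Suc k)) ` invset (C' # T') \<longleftrightarrow> (j, i, m) \<in> invset (C' # T')"
      unfolding x Suc by force
    moreover have "x \<notin> (\<lambda>(j, i). (j, i, 0::nat)) ` Pset C' S" unfolding x Suc by auto
    ultimately show ?thesis using memS unfolding x Suc by blast
  qed
qed

theorem lemma4p6:
  fixes C' :: "nat list" and S :: "nat set" and T' :: "nat list list"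
  assumes "admissible C' S"
    and "young_filling (C' # T')"
    and "non_overlapping C' S"
  shows "inv_fill (hatC C' S # C' # T') = inv_fill (C' # T') + Nhat C' S"
proof -
  let ?A = "(\<lambda>(j, i). (j, i, 0::nat)) ` Pset C' S"
  let ?B = "(\<lambda>(j, i, k). (j, i, Suc k)) ` invset (C' # T')"
  have fP: "finite (Pset C' S)"
  proof (rule finite_subset)
    show "Pset C' S \<subseteq> {..<card S} \<times> {..<length C'}" unfolding Pset_def by auto
  qed simp
  have inj1: "inj_on (\<lambda>(j, i). (j, i, 0::nat)) (Pset C' S)" by (auto simp: inj_on_def)
  have inj2: "inj_on (\<lambda>(j, i, k). (j, i, Suc k)) (invset (C' # T'))" by (auto simp: inj_on_def)
  have d: "?A \<inter> ?B = {}" by auto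
  have "card (?A \<union> ?B) = card ?A + card ?B"
    by (rule card_Un_disjoint) (use fP fin_invset d in auto)
  also have "card ?A = card (Pset C' S)" by (rule card_image[OF inj1])
  also have "card ?B = card (invset (C' # T'))" by (rule card_image[OF inj2])
  finally show ?thesis
    unfolding inv_fill_invset split_inv card_P[OF assms(1,3)] by simp
qed

end
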